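(* Let $R$ be a commutative unital ring. Then the following are equivalent: (i) $\operatorname{sr}(R) \le 2$; (ii) for every ideal $I$ of $R$, the natural map $\operatorname{SL}_2(R) \to \operatorname{SL}_2(R/I)$ is surjective; (iii) for every ideal $I$ of $R$ and every $n \ge 2$, the natural map $\operatorname{SL}_n(R) \to \operatorname{SL}_n(R/I)$ is surjective.
   Context: A row $(r_1,\dots,r_n)\in R^n$ is unimodular if $\sum_i R r_i = R$; $\operatorname{Um}_n(R)$ is the set of such rows. A row $(r_1,\dots,r_{n+1})\in\operatorname{Um}_{n+1}(R)$ ($n>0$) is stable if there exist $s_1,\dots,s_n\in R$ with $(r_1+s_1r_{n+1},\dots,r_n+s_nr_{n+1})\in\operatorname{Um}_n(R)$. An integer $n>0$ lies in the stable range of $R$ if every row in $\operatorname{Um}_{n+1}(R)$ is stable; the Bass stable rank $\operatorname{sr}(R)$ is the least integer in the stable range of $R$ (and $\infty$ if there is none). *)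

theory Defs
  imports "Jordan_Normal_Form.Determinant" "HOL-Library.Extended_Nat"
begin

text \<open>Rows of length n are functions nat => 'a, only the entries with index < n matter.
  A row r of length n is unimodular iff the ideal generated by r 0, ..., r (n-1) is the whole ring.\<close>
definition unimodular :: "nat \<Rightarrow> (nat \<Rightarrow> 'a::comm_ring_1) \<Rightarrow> bool" where
  "unimodular n r \<longleftrightarrow> (\<exists>c. (\<Sum>i<n. c i * r i) = 1)"

text \<open>A row (r 0, ..., r n) of length n+1 is stable.\<close>
definition stable_row :: "nat \<Rightarrow> (nat \<Rightarrow> 'a::comm_ring_1) \<Rightarrow> bool" where
  "stable_row n r \<longleftrightarrow> (\<exists>s. unimodular n (\<lambda>i. r i + s i * r n))"

definition in_stable_range :: "'a::comm_ring_1 itself \<Rightarrow> nat \<Rightarrow> bool" where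
  "in_stable_range _ n \<longleftrightarrow> n > 0 \<and>
     (\<forall>r :: nat \<Rightarrow> 'a. unimodular (Suc n) r \<longrightarrow> stable_row n r)"

definition stable_rank :: "'a::comm_ring_1 itself \<Rightarrow> enat" where
  "stable_rank T = (if \<exists>n. in_stable_range T n
      then enat (LEAST n. in_stable_range T n) else \<infinity>)"

definition ring_ideal :: "'a::comm_ring_1 set \<Rightarrow> bool" where
  "ring_ideal I \<longleftrightarrow> 0 \<in> I \<and> (\<forall>x\<in>I. \<forall>y\<in>I. x + y \<in> I) \<and> (\<forall>r. \<forall>x\<in>I. r * x \<in> I)"

text \<open>Surjectivity of the natural map SL_n(R) -> SL_n(R/I), written out on representatives:
  every n x n matrix over R whose determinant is 1 modulo I (i.e. every element of SL_n(R/I),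
  lifted entrywise) is congruent modulo I entrywise to a matrix of determinant 1.\<close>
definition SL_reduction_surj :: "'a::comm_ring_1 set \<Rightarrow> nat \<Rightarrow> bool" where
  "SL_reduction_surj I n \<longleftrightarrow>
     (\<forall>A \<in> carrier_mat n n. det A - 1 \<in> I \<longrightarrow>
        (\<exists>B \<in> carrier_mat n n. det B = 1 \<and> (\<forall>i<n. \<forall>j<n. B $$ (i,j) - A $$ (i,j) \<in> I)))"

end

theory Submission
  imports Defs
begin

lemma ideal_add: "ring_ideal I \<Longrightarrow> x \<in> I \<Longrightarrow> y \<in> I \<Longrightarrow> x + y \<in> I"
  unfolding ring_ideal_def by blast
lemma ideal_mult: "ring_ideal I \<Longrightarrow> x \<in> I \<Longrightarrow> r * x \<in> I"
  unfolding ring_ideal_def by blast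
lemma ideal_mult2: "ring_ideal I \<Longrightarrow> x \<in> I \<Longrightarrow> x * r \<in> I"
  using ideal_mult[of I x r] by (simp add: mult.commute)
lemma ideal_zero: "ring_ideal I \<Longrightarrow> 0 \<in> I"
  unfolding ring_ideal_def by blast
lemma ideal_neg: "ring_ideal I \<Longrightarrow> x \<in> I \<Longrightarrow> - x \<in> I"
  using ideal_mult[of I x "-1"] by simp
lemma ideal_diff: "ring_ideal I \<Longrightarrow> x \<in> I \<Longrightarrow> y \<in> I \<Longrightarrow> x - y \<in> I"
  using ideal_add[of I x "-y"] ideal_neg[of I y] by simp
lemma ideal_sum: assumes "ring_ideal I" "finite S" "\<And>x. x \<in> S \<Longrightarrow> f x \<in> I" shows "sum f S \<in> I"
  using assms(2,3) by (induction S rule: finite_induct) (auto intro: ideal_add ideal_zero assms(1))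
lemma ideal_prod: assumes I: "ring_ideal I" and "finite S" "\<And>x. x \<in> S \<Longrightarrow> f x - g x \<in> I" shows "prod f S - prod g S \<in> I"
  using assms(2,3)
proof (induction S rule: finite_induct)
  case empty
  then show ?case by (simp add: ideal_zero I)
next
  case (insert a S)
  have "prod f (insert a S) - prod g (insert a S) = (f a - g a) * prod f S + g a * (prod f S - prod g S)"
    using insert by (simp add: algebra_simps)
  also have "\<dots> \<in> I" using insert by (intro ideal_add[OF I ideal_mult2[OF I] ideal_mult[OF I]]) auto
  finally show ?case .
qed

lemma det_cong:
  assumes I: "ring_ideal I" and A: "A \<in> carrier_mat n n" and B: "B \<in> carrier_mat n n"
    and c: "\<And>i j. i < n \<Longrightarrow> j < n \<Longrightarrow> B $$ (i,j) - A $$ (i,j) \<in> I"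
  shows "det B - det A \<in> I"
proof -
  have "det B - det A = (\<Sum> p \<in> {p. p permutes {0 ..< n}}. signof p * ((\<Prod> i = 0 ..< n. B $$ (i, p i)) - (\<Prod> i = 0 ..< n. A $$ (i, p i))))"
    unfolding det_def'[OF A] det_def'[OF B] sum_subtractf[symmetric] by (simp add: right_diff_distrib)
  also have "\<dots> \<in> I"
  proof (rule ideal_sum[OF I])
    show "finite {p. p permutes {0..<n}}" by (simp add: finite_permutations)
    fix p assume "p \<in> {p. p permutes {0..<n}}"
    hence "\<And>i. i \<in> {0..<n} \<Longrightarrow> p i < n"
      using permutes_in_image by fastforce
    then show "signof p * ((\<Prod> i = 0 ..< n. B $$ (i, p i)) - (\<Prod> i = 0 ..< n. A $$ (i, p i))) \<in> I"
      by (intro ideal_mult[OF I] ideal_prod[OF I]) (auto intro: c)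
  qed
  finally show ?thesis .
qed

lemma sr_up:
  assumes "in_stable_range TYPE('a::comm_ring_1) m"
  shows "in_stable_range TYPE('a) (Suc m)"
  unfolding in_stable_range_def
proof (intro conjI allI impI)
  show "Suc m > 0" by simp
  fix r :: "nat \<Rightarrow> 'a" assume "unimodular (Suc (Suc m)) r"
  then obtain x where x: "(\<Sum>i<Suc (Suc m). x i * r i) = 1" unfolding unimodular_def by blast
  define r' where "r' = (\<lambda>i. if i < m then r i else x m * r m + x (Suc m) * r (Suc m))"
  have "(\<Sum>i<Suc m. (\<lambda>i. if i < m then x i else 1) i * r' i) = 1"
  proof -
    have "(\<Sum>i<Suc m. (\<lambda>i. if i < m then x i else 1) i * r' i) = (\<Sum>i<m. x i * r i) + (x m * r m + x (Suc m) * r (Suc m))"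
      by (simp add: r'_def)
    also have "\<dots> = 1" using x by (simp add: add.assoc)
    finally show ?thesis .
  qed
  hence "unimodular (Suc m) r'" unfolding unimodular_def by (intro exI[where x="\<lambda>i. if i < m then x i else 1"])
  with assms obtain t where "unimodular m (\<lambda>i. r' i + t i * r' m)"
    unfolding in_stable_range_def stable_row_def by blast
  then obtain q where q: "(\<Sum>i<m. q i * (r' i + t i * r' m)) = 1" unfolding unimodular_def by blast
  define s where "s = (\<lambda>i. if i < m then t i * x (Suc m) else 0)"
  define c where "c = (\<lambda>i. if i < m then q i else (\<Sum>i<m. q i * t i * x m))"
  have "(\<Sum>i<Suc m. c i * (r i + s i * r (Suc m))) = (\<Sum>i<m. q i * (r' i + t i * r' m))"
  proof -
    have "(\<Sum>i<Suc m. c i * (r i + s i * r (Suc m))) = (\<Sum>i<m. q i * (r i + t i * x (Suc m) * r (Suc m))) + (\<Sum>i<m. q i * t i * x m) * r m"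
      by (simp add: c_def s_def)
    also have "(\<Sum>i<m. q i * t i * x m) * r m = (\<Sum>i<m. q i * t i * x m * r m)"
      by (simp add: sum_distrib_right)
    also have "(\<Sum>i<m. q i * (r i + t i * x (Suc m) * r (Suc m))) + (\<Sum>i<m. q i * t i * x m * r m) = (\<Sum>i<m. q i * (r i + t i * x (Suc m) * r (Suc m)) + q i * t i * x m * r m)"
      by (simp add: sum.distrib)
    also have "\<dots> = (\<Sum>i<m. q i * (r' i + t i * r' m))"
      by (rule sum.cong) (auto simp: r'_def algebra_simps)
    finally show ?thesis .
  qed
  with q have "unimodular (Suc m) (\<lambda>i. r i + s i * r (Suc m))" unfolding unimodular_def by metis
  then show "stable_row (Suc m) r" unfolding stable_row_def by blast
qed

lemma sr_mono:
  assumes "in_stable_range TYPE('a::comm_ring_1) m" "m \<le> k"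
  shows "in_stable_range TYPE('a) k"
  using assms(2,1) by (induction k rule: dec_induct) (auto intro: sr_up)

lemma sr_le2: "stable_rank TYPE('a::comm_ring_1) \<le> 2 \<longleftrightarrow> in_stable_range TYPE('a) 2"
proof
  assume h: "stable_rank TYPE('a) \<le> 2"
  have ex: "\<exists>n. in_stable_range TYPE('a) n"
  proof (rule ccontr)
    assume "\<not> (\<exists>n. in_stable_range TYPE('a) n)"
    then have "stable_rank TYPE('a) = \<infinity>" by (simp add: stable_rank_def)
    with h show False by simp
  qed
  define n0 where "n0 = (LEAST n. in_stable_range TYPE('a) n)"
  have n0: "in_stable_range TYPE('a) n0" unfolding n0_def using ex by (metis LeastI)
  have "enat n0 \<le> 2" using h ex unfolding stable_rank_def n0_def by simp
  then have "n0 \<le> 2" by (simp add: numeral_eq_enat)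
  then show "in_stable_range TYPE('a) 2" using n0 sr_mono by blast
next
  assume h: "in_stable_range TYPE('a) 2"
  then have "(LEAST n. in_stable_range TYPE('a) n) \<le> 2" by (rule Least_le)
  then show "stable_rank TYPE('a) \<le> 2" using h unfolding stable_rank_def
    by (auto simp: numeral_eq_enat)
qed

definition liftable :: "'a::comm_ring_1 set \<Rightarrow> nat \<Rightarrow> 'a mat \<Rightarrow> bool" where
  "liftable I n A \<longleftrightarrow> (\<exists>B \<in> carrier_mat n n. det B = 1 \<and> (\<forall>i<n. \<forall>j<n. B $$ (i,j) - A $$ (i,j) \<in> I))"

lemma SL_iff: "SL_reduction_surj I n \<longleftrightarrow> (\<forall>A \<in> carrier_mat n n. det A - 1 \<in> I \<longrightarrow> liftable I n A)"
  unfolding SL_reduction_surj_def liftable_def by simp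

lemma lift_trans:
  assumes I: "ring_ideal I" and L: "liftable I n A1"
    and d: "\<And>i j. i < n \<Longrightarrow> j < n \<Longrightarrow> A1 $$ (i,j) - A $$ (i,j) \<in> I"
  shows "liftable I n A"
proof -
  from L obtain B where B: "B \<in> carrier_mat n n" "det B = 1" "\<And>i j. i<n \<Longrightarrow> j<n \<Longrightarrow> B $$ (i,j) - A1 $$ (i,j) \<in> I"
    unfolding liftable_def by blast
  have "B $$ (i,j) - A $$ (i,j) \<in> I" if "i<n" "j<n" for i j
  proof -
    have "B $$ (i,j) - A $$ (i,j) = (B $$ (i,j) - A1 $$ (i,j)) + (A1 $$ (i,j) - A $$ (i,j))" by simp
    also have "\<dots> \<in> I" using B(3)[OF that] d[OF that] by (rule ideal_add[OF I])
    finally show ?thesis .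
  qed
  then show ?thesis using B unfolding liftable_def by blast
qed

lemma addrow_lift:
  assumes I: "ring_ideal I" and A: "A \<in> carrier_mat n n" and kl: "k < n" "l < n" "k \<noteq> l"
    and L: "liftable I n (addrow a k l A)"
  shows "liftable I n A"
proof -
  from L obtain B where B: "B \<in> carrier_mat n n" "det B = 1"
    and h: "\<And>i j. i<n \<Longrightarrow> j<n \<Longrightarrow> B $$ (i,j) - (addrow a k l A) $$ (i,j) \<in> I"
    unfolding liftable_def by blast
  define B' where "B' = addrow (-a) k l B"
  have B'c: "B' \<in> carrier_mat n n" using B unfolding B'_def by (simp add: mat_addrow_def)
  have dB': "det B' = 1" unfolding B'_def using det_addrow[OF kl(2) kl(3) B(1)] B(2) by simp
  have "B' $$ (i,j) - A $$ (i,j) \<in> I" if ij: "i<n" "j<n" for i j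
  proof (cases "i = k")
    case True
    have h1: "B $$ (k,j) - (a * A $$ (l,j) + A $$ (k,j)) \<in> I"
      using h[OF kl(1) ij(2)] A ij kl by (simp add: mat_addrow_def)
    have h2: "B $$ (l,j) - A $$ (l,j) \<in> I"
      using h[OF kl(2) ij(2)] A ij kl by (simp add: mat_addrow_def)
    have "B' $$ (i,j) - A $$ (i,j) = (B $$ (k,j) - (a * A $$ (l,j) + A $$ (k,j))) + (-a) * (B $$ (l,j) - A $$ (l,j))"
      using True B ij kl unfolding B'_def by (simp add: mat_addrow_def algebra_simps)
    also have "\<dots> \<in> I" by (rule ideal_add[OF I h1 ideal_mult[OF I h2]])
    finally show ?thesis .
  next
    case False
    then show ?thesis using h[OF ij] A B ij unfolding B'_def by (simp add: mat_addrow_def)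
  qed
  then show ?thesis using B'c dB' unfolding liftable_def by blast
qed

definition rop1 :: "(nat \<Rightarrow> 'a::comm_ring_1) \<Rightarrow> nat \<Rightarrow> nat set \<Rightarrow> 'a mat \<Rightarrow> 'a mat" where
  "rop1 s m S A = mat (dim_row A) (dim_col A) (\<lambda>(i,j). if i \<in> S then A $$ (i,j) + s i * A $$ (m,j) else A $$ (i,j))"

definition rop2 :: "(nat \<Rightarrow> 'a::comm_ring_1) \<Rightarrow> nat \<Rightarrow> nat set \<Rightarrow> 'a mat \<Rightarrow> 'a mat" where
  "rop2 t m S A = mat (dim_row A) (dim_col A) (\<lambda>(i,j). if i = m then A $$ (m,j) + (\<Sum>k\<in>S. t k * A $$ (k,j)) else A $$ (i,j))"

lemma rop1:
  assumes I: "ring_ideal I" and A: "A \<in> carrier_mat n n" and m: "m < n"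
    and S: "finite S" "S \<subseteq> {..<n}" "m \<notin> S"
  shows "rop1 s m S A \<in> carrier_mat n n \<and> det (rop1 s m S A) = det A \<and> (liftable I n (rop1 s m S A) \<longrightarrow> liftable I n A)"
  using S
proof (induction S rule: finite_induct)
  case empty
  have "rop1 s m {} A = A" using A by (intro eq_matI) (auto simp: rop1_def)
  then show ?case using A by simp
next
  case (insert x S)
  have C: "rop1 s m S A \<in> carrier_mat n n" using A by (simp add: rop1_def)
  have eq: "rop1 s m (insert x S) A = addrow (s x) x m (rop1 s m S A)"
    using A m insert.hyps insert.prems by (intro eq_matI) (auto simp: rop1_def mat_addrow_def)
  have x: "x < n" "x \<noteq> m" using insert by auto
  show ?case unfolding eq using insert det_addrow[OF m x(2) C] addrow_lift[OF I C x(1) m x(2)] C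
    by (simp add: mat_addrow_def)
qed

lemma rop2:
  assumes I: "ring_ideal I" and A: "A \<in> carrier_mat n n" and m: "m < n"
    and S: "finite S" "S \<subseteq> {..<n}" "m \<notin> S"
  shows "rop2 t m S A \<in> carrier_mat n n \<and> det (rop2 t m S A) = det A \<and> (liftable I n (rop2 t m S A) \<longrightarrow> liftable I n A)"
  using S
proof (induction S rule: finite_induct)
  case empty
  have "rop2 t m {} A = A" using A by (intro eq_matI) (auto simp: rop2_def)
  then show ?case using A by simp
next
  case (insert x S)
  have C: "rop2 t m S A \<in> carrier_mat n n" using A by (simp add: rop2_def)
  have eq: "rop2 t m (insert x S) A = addrow (t x) m x (rop2 t m S A)"
    using A m insert.hyps insert.prems by (intro eq_matI) (auto simp: rop2_def mat_addrow_def algebra_simps)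
  have x: "x < n" "m \<noteq> x" using insert by auto
  show ?case unfolding eq using insert det_addrow[OF x(1) x(2) C] addrow_lift[OF I C m x(1) x(2)] C
    by (simp add: mat_addrow_def)
qed

lemma det_lastcol:
  assumes A: "(A::'a::comm_ring_1 mat) \<in> carrier_mat (Suc m) (Suc m)"
    and z: "\<And>i. i < m \<Longrightarrow> A $$ (i,m) = 0" and o: "A $$ (m,m) = 1"
  shows "det A = det (mat_delete A m m)"
proof -
  have "det A = (\<Sum>i<Suc m. A $$ (i,m) * cofactor A i m)"
    by (rule laplace_expansion_column[OF A]) simp
  also have "\<dots> = cofactor A m m" using z o by simp
  also have "\<dots> = det (mat_delete A m m)"
    unfolding cofactor_def by (simp add: mult_2[symmetric] power_mult)
  finally show ?thesis .
qed


lemma det1: assumes "A \<in> carrier_mat 1 1" shows "det A = A $$ (0,0)"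
  using assms by (subst det_upper_triangular[of _ 1]) (auto intro!: upper_triangularI simp: diag_mat_def)

lemma det2: assumes A: "(A::'a::comm_ring_1 mat) \<in> carrier_mat 2 2" shows "det A = A$$(0,0)*A$$(1,1) - A$$(0,1)*A$$(1,0)"
proof -
  have "det A = (\<Sum>i<2. A $$ (i,0) * cofactor A i 0)" by (rule laplace_expansion_column[OF A]) auto
  also have "\<dots> = A$$(0,0)*A$$(1,1) - A$$(0,1)*A$$(1,0)"
    using A by (simp add: numeral_2_eq_2 cofactor_def det1 mat_delete_carrier mat_delete_def)
  finally show ?thesis .
qed

lemma less2: "(i::nat) < 2 \<longleftrightarrow> i = 0 \<or> i = 1" by auto

lemma sum3: "(\<Sum>i<(3::nat). f i) = f 0 + f 1 + (f 2 :: 'a::comm_ring_1)"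
  by (simp add: numeral_3_eq_3 numeral_2_eq_2)
lemma sum2: "(\<Sum>i<(2::nat). f i) = f 0 + (f 1 :: 'a::comm_ring_1)"
  by (simp add: numeral_2_eq_2)

lemma R2_S2:
  assumes sr: "in_stable_range TYPE('a::comm_ring_1) 2" and I: "ring_ideal (I::'a set)"
  shows "SL_reduction_surj I 2"
  unfolding SL_iff
proof (intro ballI impI)
  fix A :: "'a mat" assume A: "A \<in> carrier_mat 2 2" and dA: "det A - 1 \<in> I"
  define a b c d where "a = A $$ (0,0)" "b = A $$ (0,1)" "c = A $$ (1,0)" "d = A $$ (1,1)"
  define e where "e = det A - 1"
  have e: "e = a * d - b * c - 1" unfolding e_def a_b_c_d_def det2[OF A] by simp
  define r where "r = (\<lambda>i::nat. if i = 0 then a else if i = 1 then b else e)"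
  have "(\<Sum>i<3. (\<lambda>i::nat. if i = 0 then d else if i = 1 then - c else -1) i * r i) = 1"
    unfolding sum3 r_def e by (simp add: algebra_simps)
  then have "unimodular 3 r" unfolding unimodular_def by (intro exI)
  then obtain s where "unimodular 2 (\<lambda>i. r i + s i * r 2)"
    using sr unfolding in_stable_range_def stable_row_def by (auto simp: numeral_3_eq_3 numeral_2_eq_2)
  then obtain p where p: "(\<Sum>i<2. p i * (r i + s i * r 2)) = 1" unfolding unimodular_def by blast
  define a' b' where "a' = a + s 0 * e" "b' = b + s 1 * e"
  have p': "p 0 * a' + p 1 * b' = 1" using p unfolding sum2 a'_b'_def r_def by simp
  define f where "f = a' * d - b' * c - 1"
  have fe: "f = e + e * (s 0 * d - s 1 * c)" unfolding f_def a'_b'_def e by (simp add: algebra_simps)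
  have eI: "e \<in> I" using dA e_def by simp
  have fI: "f \<in> I" unfolding fe by (rule ideal_add[OF I eI ideal_mult2[OF I eI]])
  define B where "B = mat 2 2 (\<lambda>(i,j). if i = 0 then (if j = 0 then a' else b') else (if j = 0 then c + f * p 1 else d - f * p 0))"
  have Bc: "B \<in> carrier_mat 2 2" unfolding B_def by simp
  have "det B = a' * (d - f * p 0) - b' * (c + f * p 1)" unfolding det2[OF Bc] by (simp add: B_def)
  also have "\<dots> = (a' * d - b' * c) - f * (p 0 * a' + p 1 * b')" by (simp add: algebra_simps)
  also have "\<dots> = 1" unfolding p' f_def by simp
  finally have dB: "det B = 1" .
  have "B $$ (i,j) - A $$ (i,j) \<in> I" if "i < 2" "j < 2" for i j
  proof -
    have f1: "B $$ (0,0) - A $$ (0,0) \<in> I" using ideal_mult[OF I eI, of "s 0"] by (simp add: B_def a'_b'_def a_b_c_d_def)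
    have f2: "B $$ (0,1) - A $$ (0,1) \<in> I" using ideal_mult[OF I eI, of "s 1"] by (simp add: B_def a'_b'_def a_b_c_d_def)
    have f3: "B $$ (1,0) - A $$ (1,0) \<in> I" using ideal_mult2[OF I fI, of "p 1"] by (simp add: B_def a'_b'_def a_b_c_d_def)
    have f4: "B $$ (1,1) - A $$ (1,1) \<in> I" using ideal_neg[OF I ideal_mult2[OF I fI, of "p 0"]] by (simp add: B_def a'_b'_def a_b_c_d_def)
    have "i = 0 \<or> i = 1" "j = 0 \<or> j = 1" using that by auto
    then show ?thesis using f1 f2 f3 f4 by (elim disjE) (simp_all only:)
  qed
  then show "liftable I 2 A" unfolding liftable_def using Bc dB by blast
qed

lemma S2_R2:
  assumes h: "\<forall>I::'a::comm_ring_1 set. ring_ideal I \<longrightarrow> SL_reduction_surj I 2"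
  shows "in_stable_range TYPE('a) 2"
  unfolding in_stable_range_def
proof (intro conjI allI impI)
  show "(0::nat) < 2" by simp
  fix r :: "nat \<Rightarrow> 'a" assume "unimodular (Suc 2) r"
  then obtain x where x: "(\<Sum>i<3. x i * r i) = 1" unfolding unimodular_def by (auto simp: numeral_3_eq_3 numeral_2_eq_2)
  define I where "I = {y. \<exists>u. y = u * r 2}"
  have I: "ring_ideal I" unfolding ring_ideal_def I_def
    by (auto simp: algebra_simps intro: exI[of _ 0]) (metis distrib_right, metis mult.assoc)
  define A where "A = mat 2 2 (\<lambda>(i,j). if i = 0 then (if j = 0 then r 0 else r 1) else (if j = 0 then - x 1 else x 0))"
  have Ac: "A \<in> carrier_mat 2 2" unfolding A_def by simp
  have "det A - 1 = (- x 2) * r 2" unfolding det2[OF Ac] using x unfolding sum3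
    by (simp add: A_def algebra_simps)
  then have "det A - 1 \<in> I" unfolding I_def by blast
  with h I Ac obtain B where Bc: "B \<in> carrier_mat 2 2" and dB: "det B = 1"
    and Bd: "\<And>i j. i<2 \<Longrightarrow> j<2 \<Longrightarrow> B $$ (i,j) - A $$ (i,j) \<in> I"
    unfolding SL_iff liftable_def by blast
  obtain u0 where u0: "B $$ (0,0) - r 0 = u0 * r 2" using Bd[of 0 0] unfolding I_def by (auto simp: A_def)
  obtain u1 where u1: "B $$ (0,1) - r 1 = u1 * r 2" using Bd[of 0 1] unfolding I_def by (auto simp: A_def)
  define s where "s = (\<lambda>i::nat. if i = 0 then u0 else u1)"
  have "(\<Sum>i<2. (\<lambda>i::nat. if i = 0 then B $$ (1,1) else - B $$ (1,0)) i * (r i + s i * r 2)) = det B"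
    unfolding sum2 det2[OF Bc] s_def using u0 u1 by (simp add: algebra_simps eq_diff_eq)
  then have "unimodular 2 (\<lambda>i. r i + s i * r 2)" unfolding unimodular_def dB by (intro exI)
  then show "stable_row 2 r" unfolding stable_row_def by blast
qed


lemma SL_step:
  assumes I: "ring_ideal (I::'a::comm_ring_1 set)" and sm: "in_stable_range TYPE('a) m"
    and sm1: "in_stable_range TYPE('a) (Suc m)" and IH: "SL_reduction_surj I m"
  shows "SL_reduction_surj I (Suc m)"
  unfolding SL_iff
proof (intro ballI impI)
  fix A :: "'a mat" assume A: "A \<in> carrier_mat (Suc m) (Suc m)" and dA: "det A - 1 \<in> I"
  define e where "e = det A - 1"
  have eI: "e \<in> I" using dA e_def by simp
  define r where "r = (\<lambda>i. if i < Suc m then A $$ (i,m) else e)"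
  have lap: "det A = (\<Sum>i<Suc m. A $$ (i,m) * cofactor A i m)"
    by (rule laplace_expansion_column[OF A]) simp
  have "(\<Sum>i<Suc (Suc m). (\<lambda>i. if i < Suc m then cofactor A i m else -1) i * r i) = 1"
  proof -
    have "(\<Sum>i<Suc (Suc m). (\<lambda>i. if i < Suc m then cofactor A i m else -1) i * r i)
        = (\<Sum>i<Suc m. cofactor A i m * A $$ (i,m)) - e"
      by (simp add: r_def)
    also have "\<dots> = 1" unfolding e_def lap by (simp add: mult.commute)
    finally show ?thesis .
  qed
  then have "unimodular (Suc (Suc m)) r" unfolding unimodular_def by (intro exI)
  then obtain s where "unimodular (Suc m) (\<lambda>i. r i + s i * r (Suc m))"
    using sm1 unfolding in_stable_range_def stable_row_def by blast
  then obtain c0 where c0: "(\<Sum>i<Suc m. c0 i * (r i + s i * r (Suc m))) = 1" unfolding unimodular_def by blast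
  define A1 where "A1 = mat (Suc m) (Suc m) (\<lambda>(i,j). if j = m then A $$ (i,j) + s i * e else A $$ (i,j))"
  have A1c: "A1 \<in> carrier_mat (Suc m) (Suc m)" unfolding A1_def by simp
  have A1d: "A1 $$ (i,j) - A $$ (i,j) \<in> I" if "i < Suc m" "j < Suc m" for i j
    using that ideal_mult[OF I eI, of "s i"] ideal_zero[OF I] by (auto simp: A1_def)
  have dA1: "det A1 - 1 \<in> I"
  proof -
    have "det A1 - 1 = (det A1 - det A) + e" unfolding e_def by simp
    also have "\<dots> \<in> I" by (rule ideal_add[OF I det_cong[OF I A A1c A1d] eI])
    finally show ?thesis .
  qed
  have "(\<Sum>i<Suc m. c0 i * A1 $$ (i,m)) = 1" using c0 by (simp add: A1_def r_def)
  then have "unimodular (Suc m) (\<lambda>i. A1 $$ (i,m))" unfolding unimodular_def by (intro exI)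
  then obtain s2 where "unimodular m (\<lambda>i. A1 $$ (i,m) + s2 i * A1 $$ (m,m))"
    using sm unfolding in_stable_range_def stable_row_def by blast
  then obtain p where p: "(\<Sum>i<m. p i * (A1 $$ (i,m) + s2 i * A1 $$ (m,m))) = 1" unfolding unimodular_def by blast
  have mS: "finite {..<m}" "{..<m} \<subseteq> {..<Suc m}" "m \<notin> {..<m}" "m < Suc m" by auto
  define A2 where "A2 = rop1 s2 m {..<m} A1"
  note R2 = rop1[OF I A1c mS(4) mS(1-3), of s2, folded A2_def]
  have A2c: "A2 \<in> carrier_mat (Suc m) (Suc m)" using R2 by blast
  have A2m: "A2 $$ (i,m) = A1 $$ (i,m) + s2 i * A1 $$ (m,m)" if "i < m" for i
    using that A1c by (simp add: A2_def rop1_def)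
  have A2mm: "A2 $$ (m,m) = A1 $$ (m,m)" using A1c by (simp add: A2_def rop1_def)
  define t where "t = (\<lambda>k. (1 - A2 $$ (m,m)) * p k)"
  define A3 where "A3 = rop2 t m {..<m} A2"
  note R3 = rop2[OF I A2c mS(4) mS(1-3), of t, folded A3_def]
  have A3c: "A3 \<in> carrier_mat (Suc m) (Suc m)" using R3 by blast
  have A3m: "A3 $$ (i,m) = A2 $$ (i,m)" if "i < m" for i
    using that A2c by (simp add: A3_def rop2_def)
  have "(\<Sum>k<m. t k * A2 $$ (k,m)) = (1 - A2 $$ (m,m)) * (\<Sum>k<m. p k * A2 $$ (k,m))"
    by (simp add: t_def sum_distrib_left mult.assoc)
  also have "(\<Sum>k<m. p k * A2 $$ (k,m)) = 1" using p A2m by simp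
  finally have A3mm: "A3 $$ (m,m) = 1" using A2c by (simp add: A3_def rop2_def)
  define A4 where "A4 = rop1 (\<lambda>i. - A3 $$ (i,m)) m {..<m} A3"
  note R4 = rop1[OF I A3c mS(4) mS(1-3), of "\<lambda>i. - A3 $$ (i,m)", folded A4_def]
  have A4c: "A4 \<in> carrier_mat (Suc m) (Suc m)" using R4 by blast
  have A4m: "A4 $$ (i,m) = 0" if "i < m" for i
    using that A3c A3mm by (simp add: A4_def rop1_def)
  have A4mm: "A4 $$ (m,m) = 1" using A3c A3mm by (simp add: A4_def rop1_def)
  have dA4: "det A4 = det A1" using R2 R3 R4 by simp
  define A' where "A' = mat_delete A4 m m"
  have A'c: "A' \<in> carrier_mat m m" using mat_delete_carrier[OF A4c] unfolding A'_def by simp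
  have dA': "det A' = det A4" unfolding A'_def by (rule det_lastcol[OF A4c A4m A4mm, symmetric])
  have "det A' - 1 \<in> I" unfolding dA' dA4 by (rule dA1)
  then have "liftable I m A'" using IH A'c unfolding SL_iff by blast
  then obtain B' where B'c: "B' \<in> carrier_mat m m" and dB': "det B' = 1"
    and B'd: "\<And>i j. i<m \<Longrightarrow> j<m \<Longrightarrow> B' $$ (i,j) - A' $$ (i,j) \<in> I"
    unfolding liftable_def by blast
  define B where "B = mat (Suc m) (Suc m) (\<lambda>(i,j). if i < m \<and> j < m then B' $$ (i,j) else A4 $$ (i,j))"
  have Bc: "B \<in> carrier_mat (Suc m) (Suc m)" unfolding B_def by simp
  have delB: "mat_delete B m m = B'"
    using B'c by (intro eq_matI) (auto simp: mat_delete_def B_def)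
  have "det B = det B'"
    using det_lastcol[OF Bc] A4m A4mm delB by (simp add: B_def)
  with dB' have dB: "det B = 1" by simp
  have "B $$ (i,j) - A4 $$ (i,j) \<in> I" if "i < Suc m" "j < Suc m" for i j
  proof (cases "i < m \<and> j < m")
    case True
    then have "A' $$ (i,j) = A4 $$ (i,j)" using A4c by (simp add: A'_def mat_delete_def)
    then show ?thesis using B'd[of i j] True that by (simp add: B_def)
  next
    case False
    then show ?thesis using that ideal_zero[OF I] by (auto simp: B_def)
  qed
  then have "liftable I (Suc m) A4" unfolding liftable_def using Bc dB by blast
  then have "liftable I (Suc m) A1" using R2 R3 R4 by blast
  then show "liftable I (Suc m) A" using lift_trans[OF I _ A1d] by blast
qed

theorem mainTheorem3:
  shows "(stable_rank TYPE('a::comm_ring_1) \<le> 2 \<longleftrightarrow>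
            (\<forall>I::'a set. ring_ideal I \<longrightarrow> SL_reduction_surj I 2))
       \<and> ((\<forall>I::'a set. ring_ideal I \<longrightarrow> SL_reduction_surj I 2) \<longleftrightarrow>
            (\<forall>I::'a set. ring_ideal I \<longrightarrow> (\<forall>n\<ge>2. SL_reduction_surj I n)))"
proof -
  have all: "SL_reduction_surj I n"
    if sr: "in_stable_range TYPE('a) 2" and I: "ring_ideal (I::'a set)" and n: "2 \<le> n" for I n
    using n
  proof (induction n rule: nat_induct_at_least)
    case base
    then show ?case by (rule R2_S2[OF sr I])
  next
    case (Suc n)
    show ?case
      by (rule SL_step[OF I sr_mono[OF sr Suc.hyps] sr_mono[OF sr] Suc.IH]) (use Suc.hyps in simp)
  qed
  have e1: "stable_rank TYPE('a) \<le> 2 \<longleftrightarrow> (\<forall>I::'a set. ring_ideal I \<longrightarrow> SL_reduction_surj I 2)"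
    using sr_le2 R2_S2 S2_R2 by blast
  have e2: "(\<forall>I::'a set. ring_ideal I \<longrightarrow> SL_reduction_surj I 2) \<longleftrightarrow>
            (\<forall>I::'a set. ring_ideal I \<longrightarrow> (\<forall>n\<ge>2. SL_reduction_surj I n))"
    using all S2_R2 by blast
  show ?thesis using e1 e2 by blast
qed

end
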